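(* For every $\eta\ge0$ define \[ L_{\Phi,\eta}:=\max_{\pi\in\Theta}\|M_\pi+\eta I\|_2. \] Then \[ \rho^{\mathrm{dir}}_{\alpha,\eta}\le\sqrt{1-2\alpha(c_\Phi+\eta)+\alpha^2L_{\Phi,\eta}^2}. \] Since $L_{\Phi,\eta}\le L_\Phi+\eta$, also \[ \rho^{\mathrm{dir}}_{\alpha,\eta}\le\sqrt{1-2\alpha(c_\Phi+\eta)+\alpha^2(L_\Phi+\eta)^2}. \] Hence, if $c_\Phi+\eta>0$ and $0<\alpha<2(c_\Phi+\eta)/L_{\Phi,\eta}^2$, then $\rho^{\mathrm{dir}}_{\alpha,\eta}<1$. The same conclusion holds if $c_\Phi+\eta>0$ and $0<\alpha<2(c_\Phi+\eta)/(L_\Phi+\eta)^2$.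
   Context: Consider a finite discounted MDP with state space $\mathcal S=\{1,\dots,|\mathcal S|\}$, action space $\mathcal A=\{1,\dots,|\mathcal A|\}$, transition probabilities $P(s'\mid s,a)$, and discount factor $\gamma\in(0,1)$. State-action vectors are ordered as $(1,1),(2,1),\dots,(|\mathcal S|,1),(1,2),\dots$. The matrix $P\in\mathbb R^{|\mathcal S||\mathcal A|\times|\mathcal S|}$ has rows $P(\cdot\mid s,a)$. The set $\Theta$ is the finite set of deterministic stationary policies $\pi:\mathcal S\to\mathcal A$. For $\pi\in\Theta$, $\Pi^\pi$ has entry $1$ at row $s$, column $(s,\pi(s))$, and zeros elsewhere. The feature matrix $\Phi\in\mathbb R^{|\mathcal S||\mathcal A|\times m}$ has full column rank. The distribution $d>0$ on $\mathcal S\times\mathcal A$ gives $D=\mathrm{diag}(d)$. The step size is $\alpha\in(0,1)$ and the regularization weight is $\eta\ge0$. Let $M_\pi:=\Phi^\top D\Phi-\gamma\Phi^\top DP\Pi^\pi\Phi$. Define \[ c_\Phi:=\min_{\pi\in\Theta}\lambda_{\min}\big((M_\pi+M_\pi^\top)/2\big),\qquad L_\Phi:=\max_{\pi\in\Theta}\|M_\pi\|_2. \] For $\pi\in\Theta$, define $A^\eta_\pi:=I-\alpha(M_\pi+\eta I)$, and let $\rho^{\mathrm{dir}}_{\alpha,\eta}$ be the joint spectral radius $\lim_k\max_{\pi_i\in\Theta}\|A^\eta_{\pi_k}\cdots A^\eta_{\pi_1}\|^{1/k}$ of $\{A^\eta_\pi:\pi\in\Theta\}$. *)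

theory Defs
  imports "HOL-Analysis.Analysis"
begin

text \<open>State-action pairs are indexed by the product type 's \<times> 'a; features by the finite type 'm.
 Matrices are HOL-Analysis matrices real^'cols^'rows.\<close>

definition diag_mat :: "real^'n \<Rightarrow> real^'n^'n" where
  "diag_mat d = (\<chi> i j. if i = j then d $ i else 0)"

definition Pi_mat :: "('s::finite \<Rightarrow> 'a::finite) \<Rightarrow> real^('s \<times> 'a)^'s" where
  "Pi_mat \<pi> = (\<chi> s sa. if sa = (s, \<pi> s) then 1 else 0)"

definition M_mat :: "real \<Rightarrow> real^'s^('s::finite \<times> 'a::finite) \<Rightarrow> real^('s \<times> 'a) \<Rightarrow> real^'m^('s \<times> 'a)
    \<Rightarrow> ('s \<Rightarrow> 'a) \<Rightarrow> real^'m::finite^'m" where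
  "M_mat \<gamma> P d \<Phi> \<pi> =
     transpose \<Phi> ** diag_mat d ** \<Phi> - \<gamma> *\<^sub>R (transpose \<Phi> ** diag_mat d ** P ** Pi_mat \<pi> ** \<Phi>)"

definition opnorm2 :: "real^'n::finite^'m::finite \<Rightarrow> real" where
  "opnorm2 A = onorm (\<lambda>x. A *v x)"

text \<open>Smallest (real) eigenvalue; used for symmetric matrices, whose eigenvalues are all real.\<close>
definition lambda_min :: "real^'n::finite^'n \<Rightarrow> real" where
  "lambda_min A = Min {c. \<exists>v. v \<noteq> 0 \<and> A *v v = c *\<^sub>R v}"

definition c_Phi :: "real \<Rightarrow> real^'s^('s::finite \<times> 'a::finite) \<Rightarrow> real^('s \<times> 'a) \<Rightarrow> real^'m::finite^('s \<times> 'a) \<Rightarrow> real" where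
  "c_Phi \<gamma> P d \<Phi> = Min (range (\<lambda>\<pi>. lambda_min ((1/2) *\<^sub>R (M_mat \<gamma> P d \<Phi> \<pi> + transpose (M_mat \<gamma> P d \<Phi> \<pi>)))))"

definition L_Phi :: "real \<Rightarrow> real^'s^('s::finite \<times> 'a::finite) \<Rightarrow> real^('s \<times> 'a) \<Rightarrow> real^'m::finite^('s \<times> 'a) \<Rightarrow> real" where
  "L_Phi \<gamma> P d \<Phi> = Max (range (\<lambda>\<pi>. opnorm2 (M_mat \<gamma> P d \<Phi> \<pi>)))"

definition L_Phi_eta :: "real \<Rightarrow> real^'s^('s::finite \<times> 'a::finite) \<Rightarrow> real^('s \<times> 'a) \<Rightarrow> real^'m::finite^('s \<times> 'a) \<Rightarrow> real \<Rightarrow> real" where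
  "L_Phi_eta \<gamma> P d \<Phi> \<eta> = Max (range (\<lambda>\<pi>. opnorm2 (M_mat \<gamma> P d \<Phi> \<pi> + \<eta> *\<^sub>R mat 1)))"

definition A_mat :: "real \<Rightarrow> real^'s^('s::finite \<times> 'a::finite) \<Rightarrow> real^('s \<times> 'a) \<Rightarrow> real^'m::finite^('s \<times> 'a)
    \<Rightarrow> real \<Rightarrow> real \<Rightarrow> ('s \<Rightarrow> 'a) \<Rightarrow> real^'m^'m" where
  "A_mat \<gamma> P d \<Phi> \<alpha> \<eta> \<pi> = mat 1 - \<alpha> *\<^sub>R (M_mat \<gamma> P d \<Phi> \<pi> + \<eta> *\<^sub>R mat 1)"

fun matprod_list :: "('i \<Rightarrow> real^'n::finite^'n) \<Rightarrow> 'i list \<Rightarrow> real^'n^'n" where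
  "matprod_list A [] = mat 1"
| "matprod_list A (i # is) = A i ** matprod_list A is"

definition jsr :: "('i::finite \<Rightarrow> real^'n::finite^'n) \<Rightarrow> real" where
  "jsr A = lim (\<lambda>k. (Max {opnorm2 (matprod_list A is) | is. length is = Suc k}) powr (1 / real (Suc k)))"

end

theory Submission
  imports Defs
begin


lemma root_pow_powr: "0 \<le> (x::real) \<Longrightarrow> 0 < N \<Longrightarrow> (x ^ N) powr (1 / real N) = x"
proof (cases "x = 0")
  case False
  assume "0 \<le> x" "0 < N"
  then have "x > 0" using False by simp
  then have "(x ^ N) powr (1 / real N) = (x powr real N) powr (1 / real N)" by (simp add: powr_realpow)
  also have "\<dots> = x" using \<open>0 < N\<close> \<open>x > 0\<close> by (simp add: powr_powr)
  finally show ?thesis .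
qed simp

lemma fekete_conv:
  fixes b :: "nat \<Rightarrow> real"
  assumes nn: "\<And>n. 0 \<le> b n" and sub: "\<And>m n. b (m + n) \<le> b m * b n"
  shows "convergent (\<lambda>k. b (Suc k) powr (1 / real (Suc k)))"
proof -
  define s where "s k = b (Suc k) powr (1 / real (Suc k))" for k
  define L where "L = Inf (range s)"
  have s_nn: "0 \<le> s k" for k unfolding s_def by simp
  have bdd: "bdd_below (range s)" using s_nn by (intro bdd_belowI[of _ 0]) auto
  have Ls: "L \<le> s k" for k unfolding L_def by (rule cInf_lower[OF _ bdd]) auto
  have L0: "0 \<le> L" unfolding L_def by (rule cInf_greatest) (auto simp: s_nn)
  have "s \<longlonglongrightarrow> L"
  proof (rule LIMSEQ_I)
    fix r :: real assume r: "0 < r"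
    have "Inf (range s) < L + r/2" using r L_def by simp
    then obtain k where k: "s k < L + r/2" using cInf_lessD[of "range s"] by blast
    define m where "m = Suc k"
    define \<beta> where "\<beta> = s k"
    have ev: "\<exists>N. \<forall>n\<ge>N. s n < L + r"
    proof (cases "b m = 0")
      case True
      have "b n = 0" if "n \<ge> m" for n
      proof -
        have "b n = b (m + (n - m))" using that by simp
        also have "\<dots> \<le> b m * b (n - m)" by (rule sub)
        finally show ?thesis using True nn[of n] by simp
      qed
      then have "s n = 0" if "n \<ge> m" for n using that unfolding s_def by simp
      then show ?thesis using L0 r by (intro exI[of _ m]) auto
    next
      case False
      then have bm: "b m > 0" using nn[of m] by simp
      have \<beta>pos: "\<beta> > 0" unfolding \<beta>_def s_def using bm m_def by simp
      have \<beta>m: "\<beta> ^ m = b m"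
      proof -
        have "\<beta> ^ m = \<beta> powr real m" using \<beta>pos by (simp add: powr_realpow)
        also have "\<dots> = (b m powr (1 / real m)) powr real m"
          unfolding \<beta>_def s_def m_def by simp
        also have "\<dots> = b m" using bm m_def by (simp add: powr_powr)
        finally show ?thesis .
      qed
      have decomp: "b (q * m + j) \<le> b m ^ q * b j" for q j
      proof (induction q)
        case 0 then show ?case by simp
      next
        case (Suc q)
        have "b (Suc q * m + j) = b (m + (q * m + j))" by (simp add: add.assoc)
        also have "\<dots> \<le> b m * b (q * m + j)" by (rule sub)
        also have "\<dots> \<le> b m * (b m ^ q * b j)" using Suc bm by (intro mult_left_mono) auto
        finally show ?case by (simp add: mult.assoc)
      qed
      define C where "C = Max (b ` {..<m})"
      have Cb: "b j \<le> C" if "j < m" for j unfolding C_def using that by (intro Max_ge) auto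
      have C0: "0 \<le> C" using Cb[of 0] nn[of 0] m_def by simp
      define D where "D = (max 1 (1 / \<beta>)) ^ m"
      have D0: "0 \<le> D" unfolding D_def by simp
      have bnd: "b n \<le> \<beta> ^ n * (C * D)" for n
      proof -
        define q where "q = n div m"
        define j where "j = n mod m"
        have nq: "n = q * m + j" unfolding q_def j_def by simp
        have jm: "j < m" unfolding j_def m_def by simp
        have "b n \<le> b m ^ q * b j" using decomp nq by simp
        also have "\<dots> \<le> \<beta> ^ (q * m) * C"
          using Cb[OF jm] bm \<beta>m by (simp add: power_mult mult.commute[of q m] mult_left_mono)
        also have "\<beta> ^ (q * m) \<le> \<beta> ^ n * D"
        proof -
          have "1 \<le> (\<beta> * max 1 (1 / \<beta>)) ^ j"
            using \<beta>pos by (intro one_le_power) (auto simp: max_def field_simps)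
          also have "\<dots> = \<beta> ^ j * max 1 (1 / \<beta>) ^ j" by (simp add: power_mult_distrib)
          also have "\<dots> \<le> \<beta> ^ j * D"
            unfolding D_def using jm \<beta>pos by (intro mult_left_mono power_increasing) auto
          finally have "\<beta> ^ (q * m) * 1 \<le> \<beta> ^ (q * m) * (\<beta> ^ j * D)"
            using \<beta>pos by (intro mult_left_mono) auto
          then show ?thesis using nq by (simp add: power_add mult.assoc)
        qed
        then have "\<beta> ^ (q * m) * C \<le> \<beta> ^ n * D * C" using C0 by (intro mult_right_mono)
        finally show ?thesis by (simp add: mult_ac)
      qed
      define K where "K = C * D"
      have K0: "0 \<le> K" unfolding K_def using C0 D0 by simp
      have sb: "s n \<le> \<beta> * K powr (1 / real (Suc n))" for n
      proof -
        have "s n \<le> (\<beta> ^ Suc n * K) powr (1 / real (Suc n))"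
          unfolding s_def K_def by (intro powr_mono2 bnd) (auto simp: nn)
        also have "\<dots> = \<beta> * K powr (1 / real (Suc n))"
        proof -
          have 1: "(\<beta> ^ Suc n * K) powr (1 / real (Suc n)) = (\<beta> ^ Suc n) powr (1 / real (Suc n)) * K powr (1 / real (Suc n))"
            by (rule powr_mult)
          have 2: "(\<beta> ^ Suc n) powr (1 / real (Suc n)) = \<beta>"
            by (rule root_pow_powr) (use \<beta>pos in auto)
          show ?thesis unfolding 1 2 ..
        qed
        finally show ?thesis .
      qed
      have ev2: "\<exists>N. \<forall>n\<ge>N. \<beta> * K powr (1 / real (Suc n)) < \<beta> + r/2"
      proof (cases "K = 0")
        case True then show ?thesis using \<beta>pos r by simp
      next
        case False
        have "(\<lambda>n. 1 / real (Suc n)) \<longlonglongrightarrow> 0" by (rule LIMSEQ_Suc[OF lim_const_over_n])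
        then have "(\<lambda>n. K powr (1 / real (Suc n))) \<longlonglongrightarrow> K powr 0"
          using False by (intro tendsto_powr tendsto_const) auto
        then have "(\<lambda>n. \<beta> * K powr (1 / real (Suc n))) \<longlonglongrightarrow> \<beta> * 1"
          using False by (intro tendsto_mult tendsto_const) auto
        then have "\<forall>\<^sub>F n in sequentially. \<beta> * K powr (1 / real (Suc n)) < \<beta> + r/2"
          using r by (intro order_tendstoD(2)) auto
        then show ?thesis by (simp add: eventually_sequentially)
      qed
      then obtain N where N: "\<And>n. n \<ge> N \<Longrightarrow> \<beta> * K powr (1 / real (Suc n)) < \<beta> + r/2" by blast
      show ?thesis
      proof (intro exI[of _ N] allI impI)
        fix n assume "N \<le> n"
        have "s n < \<beta> + r/2" using sb[of n] N[OF \<open>N \<le> n\<close>] by linarith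
        then show "s n < L + r" using k \<beta>_def by linarith
      qed
    qed
    then obtain N where N: "\<And>n. n \<ge> N \<Longrightarrow> s n < L + r" by blast
    show "\<exists>N. \<forall>n\<ge>N. norm (s n - L) < r"
    proof (intro exI[of _ N] allI impI)
      fix n assume "N \<le> n"
      then show "norm (s n - L) < r" using N[of n] Ls[of n] by simp
    qed
  qed
  then show ?thesis unfolding s_def convergent_def by blast
qed



lemma opnorm2_bound: "norm (A *v x) \<le> opnorm2 A * norm x"
  unfolding opnorm2_def by (rule onorm[OF matrix_vector_mul_bounded_linear])

lemma opnorm2_nonneg: "0 \<le> opnorm2 A"
  unfolding opnorm2_def by (rule onorm_pos_le[OF matrix_vector_mul_bounded_linear])

lemma opnorm2_le: assumes "\<And>x. norm (A *v x) \<le> b * norm x" shows "opnorm2 A \<le> b"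
  unfolding opnorm2_def by (rule onorm_le) (use assms in auto)

lemma opnorm2_mult: "opnorm2 (A ** B) \<le> opnorm2 A * opnorm2 B"
proof (rule opnorm2_le)
  fix x
  have "norm ((A ** B) *v x) = norm (A *v (B *v x))" by (simp add: matrix_vector_mul_assoc)
  also have "\<dots> \<le> opnorm2 A * norm (B *v x)" by (rule opnorm2_bound)
  also have "\<dots> \<le> opnorm2 A * (opnorm2 B * norm x)"
    by (rule mult_left_mono[OF opnorm2_bound opnorm2_nonneg])
  finally show "norm ((A ** B) *v x) \<le> opnorm2 A * opnorm2 B * norm x" by (simp add: mult.assoc)
qed

lemma opnorm2_id: "opnorm2 (mat 1 :: real^'n::finite^'n) = 1"
proof -
  have "(*v) (mat 1 :: real^'n::finite^'n) = (\<lambda>x. x)" by (rule ext) simp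
  then show ?thesis unfolding opnorm2_def by (simp add: onorm_id)
qed

lemma matprod_list_append: "matprod_list A (xs @ ys) = matprod_list A xs ** matprod_list A ys"
  by (induction xs) (auto simp: matrix_mul_assoc)

lemma matprod_list_bound:
  assumes "\<And>i. opnorm2 (A i) \<le> q" "0 \<le> q"
  shows "opnorm2 (matprod_list A is) \<le> q ^ length is"
proof (induction "is")
  case Nil then show ?case by (simp add: opnorm2_id)
next
  case (Cons i js)
  have "opnorm2 (matprod_list A (i # js)) \<le> opnorm2 (A i) * opnorm2 (matprod_list A js)"
    by (simp add: opnorm2_mult)
  also have "\<dots> \<le> q * q ^ length js"
    by (rule mult_mono[OF assms(1) Cons assms(2) opnorm2_nonneg])
  finally show ?case by simp
qed

lemma finite_lists_n: "finite {is :: 'i::finite list. length is = n}"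
  using finite_lists_length_eq[of "UNIV :: 'i set" n] by simp

lemma jsr_set_finite: "finite {opnorm2 (matprod_list A is) | is :: 'i::finite list. length is = n}"
proof -
  have "{opnorm2 (matprod_list A is) | is :: 'i::finite list. length is = n}
        = (\<lambda>is. opnorm2 (matprod_list A is)) ` {is. length is = n}" by auto
  then show ?thesis using finite_imageI[OF finite_lists_n] by metis
qed

lemma jsr_set_ne: "{opnorm2 (matprod_list A is) | is :: 'i list. length is = n} \<noteq> {}"
  by (auto intro!: exI[of _ "replicate n undefined"])

definition bseq :: "('i::finite \<Rightarrow> real^'n::finite^'n) \<Rightarrow> nat \<Rightarrow> real" where
  "bseq A n = Max {opnorm2 (matprod_list A is) | is. length is = n}"

lemma bseq_ge: "length is = n \<Longrightarrow> opnorm2 (matprod_list A is) \<le> bseq A n"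
  unfolding bseq_def by (rule Max_ge[OF jsr_set_finite]) auto

lemma bseq_nonneg: "0 \<le> bseq A n"
  using bseq_ge[of "replicate n undefined" n A] opnorm2_nonneg[of "matprod_list A (replicate n undefined)"]
  by simp

lemma bseq_le: assumes "\<And>is. length is = n \<Longrightarrow> opnorm2 (matprod_list A is) \<le> c"
  shows "bseq A n \<le> c"
  unfolding bseq_def using assms by (intro Max.boundedI[OF jsr_set_finite jsr_set_ne]) auto

lemma bseq_sub: "bseq A (m + n) \<le> bseq A m * bseq A n"
proof (rule bseq_le)
  fix "is" :: "'a list" assume len: "length is = m + n"
  have "opnorm2 (matprod_list A is) = opnorm2 (matprod_list A (take m is) ** matprod_list A (drop m is))"
    by (metis append_take_drop_id matprod_list_append)
  also have "\<dots> \<le> opnorm2 (matprod_list A (take m is)) * opnorm2 (matprod_list A (drop m is))"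
    by (rule opnorm2_mult)
  also have "\<dots> \<le> bseq A m * bseq A n"
    using len by (intro mult_mono bseq_ge opnorm2_nonneg bseq_nonneg) auto
  finally show "opnorm2 (matprod_list A is) \<le> bseq A m * bseq A n" .
qed

lemma jsr_bseq: "jsr A = lim (\<lambda>k. bseq A (Suc k) powr (1 / real (Suc k)))"
  unfolding jsr_def bseq_def ..



lemma sym_inner:
  fixes S :: "real^'n::finite^'n"
  assumes sym: "transpose S = S"
  shows "(S *v x) \<bullet> y = x \<bullet> (S *v y)"
proof -
  have "x v* S = S *v x" by (metis sym transpose_matrix_vector)
  then show ?thesis using dot_lmul_matrix[of x S y] by simp
qed

lemma sym_lambda_min:
  fixes S :: "real^'n::finite^'n"
  assumes sym: "transpose S = S"
  shows "lambda_min S * (x \<bullet> x) \<le> x \<bullet> (S *v x)"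
proof -
  define f where "f x = x \<bullet> (S *v x)" for x :: "real^'n"
  have cont: "continuous_on (sphere 0 1) f"
    unfolding f_def by (intro continuous_intros linear_continuous_on bounded_linear.linear) auto
  have ne: "sphere (0::real^'n) 1 \<noteq> {}"
  proof -
    have "axis undefined (1::real) \<in> sphere (0::real^'n) 1" by (simp add: norm_axis_1)
    then show ?thesis by blast
  qed
  obtain v where v: "v \<in> sphere 0 1" and vmin: "\<And>y. y \<in> sphere 0 1 \<Longrightarrow> f v \<le> f y"
    using continuous_attains_inf[OF compact_sphere ne cont] by blast
  define c0 where "c0 = f v"
  have vv: "v \<bullet> v = 1" using v by (simp add: dot_square_norm)
  have Q: "c0 * (x \<bullet> x) \<le> f x" for x
  proof (cases "x = 0")
    case True then show ?thesis by (simp add: f_def)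
  next
    case False
    define y where "y = (1 / norm x) *\<^sub>R x"
    have "y \<in> sphere 0 1" using False by (simp add: y_def)
    then have "c0 \<le> f y" using vmin c0_def by simp
    also have "f y = (1 / norm x) * (1 / norm x) * f x"
      by (simp add: f_def y_def matrix_vector_mult_scaleR)
    also have "\<dots> = f x / (norm x)^2" by (simp add: power2_eq_square)
    finally have "c0 * (norm x)^2 \<le> f x" using False by (subst (asm) le_divide_eq) simp
    then show ?thesis by (simp add: power2_norm_eq_inner)
  qed
  define u where "u = S *v v - c0 *\<^sub>R v"
  have Qu: "0 \<le> f u - c0 * (u \<bullet> u)" using Q[of u] by simp
  have expand: "f (v + t *\<^sub>R u) - c0 * ((v + t *\<^sub>R u) \<bullet> (v + t *\<^sub>R u))
      = 2 * t * (u \<bullet> u) + t^2 * (f u - c0 * (u \<bullet> u))" for t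
  proof -
    have s1: "v \<bullet> (S *v u) = u \<bullet> (S *v v)" using sym_inner[OF sym, of v u] by (simp add: inner_commute)
    have key: "u \<bullet> u = u \<bullet> (S *v v) - c0 * (u \<bullet> v)" unfolding u_def
      by (simp add: inner_diff_right)
    have Sw: "S *v (v + t *\<^sub>R u) = S *v v + t *\<^sub>R (S *v u)"
      by (simp add: matrix_vector_right_distrib matrix_vector_mult_scaleR)
    have fw: "f (v + t *\<^sub>R u) = v \<bullet> (S *v v) + t * (v \<bullet> (S *v u)) + t * (u \<bullet> (S *v v)) + t^2 * (u \<bullet> (S *v u))"
      unfolding f_def Sw by (simp add: inner_add_left inner_add_right power2_eq_square algebra_simps)
    have ww: "(v + t *\<^sub>R u) \<bullet> (v + t *\<^sub>R u) = v \<bullet> v + 2 * t * (u \<bullet> v) + t^2 * (u \<bullet> u)"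
      by (simp add: inner_add_left inner_add_right power2_eq_square algebra_simps inner_commute)
    have c0v: "v \<bullet> (S *v v) = c0" unfolding c0_def f_def ..
    have fu: "f u = u \<bullet> (S *v u)" unfolding f_def ..
    show ?thesis unfolding fw ww s1 c0v vv fu key by (simp add: algebra_simps power2_eq_square)
  qed
  have u0: "u = 0"
  proof (rule ccontr)
    assume "u \<noteq> 0"
    then have uu: "u \<bullet> u > 0" by simp
    define q where "q = f u - c0 * (u \<bullet> u)"
    define t where "t = - (u \<bullet> u) / (q + 1)"
    have q0: "q \<ge> 0" using Qu q_def by simp
    have "0 \<le> 2 * t * (u \<bullet> u) + t^2 * q"
      using Q[of "v + t *\<^sub>R u"] expand[of t] q_def by simp
    moreover have "2 * t * (u \<bullet> u) + t^2 * q < 0"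
    proof -
      have tn: "t < 0" unfolding t_def using uu q0 by (simp add: divide_pos_pos)
      have "t * q \<ge> - (u \<bullet> u)" unfolding t_def using q0 uu
        by (simp add: field_simps)
      then have "t^2 * q \<le> t * (- (u \<bullet> u))"
        using mult_left_mono_neg[of "-(u \<bullet> u)" "t*q" t] tn by (simp add: power2_eq_square mult.assoc)
      moreover have "t * (u \<bullet> u) < 0" using tn uu by (simp add: mult_neg_pos)
      ultimately show ?thesis by linarith
    qed
    ultimately show False by simp
  qed
  define E where "E = {c. \<exists>v. v \<noteq> 0 \<and> S *v v = c *\<^sub>R v}"
  have c0E: "c0 \<in> E" unfolding E_def using u0 v by (auto simp: u_def intro!: exI[of _ v])
  have c0le: "c0 \<le> c" if cE: "c \<in> E" for c
  proof -
    obtain w where w: "w \<noteq> 0" "S *v w = c *\<^sub>R w" using cE unfolding E_def by auto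
    have "c0 * (w \<bullet> w) \<le> c * (w \<bullet> w)" using Q[of w] w by (simp add: f_def)
    then show ?thesis using w by simp
  qed
  define g where "g c = (SOME w. w \<noteq> 0 \<and> S *v w = c *\<^sub>R w)" for c
  have g: "g c \<noteq> 0 \<and> S *v g c = c *\<^sub>R g c" if "c \<in> E" for c
  proof -
    from that obtain w where "w \<noteq> 0 \<and> S *v w = c *\<^sub>R w" unfolding E_def by auto
    then show ?thesis unfolding g_def by (rule someI)
  qed
  have inj: "inj_on g E"
  proof (rule inj_onI)
    fix c c' assume "c \<in> E" "c' \<in> E" "g c = g c'"
    then have "c *\<^sub>R g c = c' *\<^sub>R g c" "g c \<noteq> 0" using g by metis+
    then show "c = c'" by simp
  qed
  have orth: "pairwise orthogonal (g ` E)"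
  proof (clarsimp simp: pairwise_def orthogonal_def)
    fix c c' assume cE: "c \<in> E" "c' \<in> E" and ne: "g c \<noteq> g c'"
    then have "c \<noteq> c'" by auto
    have "c * (g c \<bullet> g c') = (S *v g c) \<bullet> g c'" using g[OF cE(1)] by simp
    also have "\<dots> = g c \<bullet> (S *v g c')" by (rule sym_inner[OF sym])
    also have "\<dots> = c' * (g c \<bullet> g c')" using g[OF cE(2)] by simp
    finally show "g c \<bullet> g c' = 0" using \<open>c \<noteq> c'\<close> by simp
  qed
  have "0 \<notin> g ` E" using g by auto
  then have "independent (g ` E)" using pairwise_orthogonal_independent orth by blast
  then have "finite (g ` E)" by (rule independent_imp_finite)
  then have finE: "finite E" using finite_imageD inj by blast
  have "lambda_min S = c0" unfolding lambda_min_def E_def[symmetric]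
    by (rule Min_eqI[OF finE c0le c0E])
  then show ?thesis using Q[of x] f_def by simp
qed



lemma transpose_sym_half: "transpose ((1/2) *\<^sub>R (M + transpose M)) = (1/2) *\<^sub>R (M + transpose M)"
  for M :: "real^'n::finite^'n"
  by (simp add: transpose_def vec_eq_iff)

lemma quad_half: "x \<bullet> (((1/2) *\<^sub>R (M + transpose M)) *v x) = x \<bullet> (M *v x)"
  for M :: "real^'n::finite^'n"
proof -
  have "x \<bullet> (transpose M *v x) = x \<bullet> (M *v x)"
    using dot_lmul_matrix[of x M x] by (simp add: inner_commute)
  then show ?thesis
    by (simp add: matrix_vector_mult_add_rdistrib scaleR_matrix_vector_assoc[symmetric] inner_add_right)
qed

theorem corollary1:
  fixes \<gamma> \<alpha> \<eta> :: real
    and P :: "real^'s::finite^('s \<times> 'a::finite)"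
    and d :: "real^('s \<times> 'a)"
    and \<Phi> :: "real^'m::finite^('s \<times> 'a)"
  assumes gamma: "0 < \<gamma>" "\<gamma> < 1"
    and P_nonneg: "\<forall>sa s'. 0 \<le> P $ sa $ s'"
    and P_rows: "\<forall>sa. (\<Sum>s'\<in>UNIV. P $ sa $ s') = 1"
    and Phi_rank: "rank \<Phi> = CARD('m)"
    and d_pos: "\<forall>sa. 0 < d $ sa"
    and d_sum: "(\<Sum>sa\<in>UNIV. d $ sa) = 1"
    and alpha: "0 < \<alpha>" "\<alpha> < 1"
    and eta: "0 \<le> \<eta>"
  shows "jsr (A_mat \<gamma> P d \<Phi> \<alpha> \<eta>)
           \<le> sqrt (1 - 2 * \<alpha> * (c_Phi \<gamma> P d \<Phi> + \<eta>) + \<alpha>\<^sup>2 * (L_Phi_eta \<gamma> P d \<Phi> \<eta>)\<^sup>2)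
    \<and> L_Phi_eta \<gamma> P d \<Phi> \<eta> \<le> L_Phi \<gamma> P d \<Phi> + \<eta>
    \<and> jsr (A_mat \<gamma> P d \<Phi> \<alpha> \<eta>)
           \<le> sqrt (1 - 2 * \<alpha> * (c_Phi \<gamma> P d \<Phi> + \<eta>) + \<alpha>\<^sup>2 * (L_Phi \<gamma> P d \<Phi> + \<eta>)\<^sup>2)
    \<and> (c_Phi \<gamma> P d \<Phi> + \<eta> > 0 \<and> \<alpha> < 2 * (c_Phi \<gamma> P d \<Phi> + \<eta>) / (L_Phi_eta \<gamma> P d \<Phi> \<eta>)\<^sup>2
         \<longrightarrow> jsr (A_mat \<gamma> P d \<Phi> \<alpha> \<eta>) < 1)
    \<and> (c_Phi \<gamma> P d \<Phi> + \<eta> > 0 \<and> \<alpha> < 2 * (c_Phi \<gamma> P d \<Phi> + \<eta>) / (L_Phi \<gamma> P d \<Phi> + \<eta>)\<^sup>2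
         \<longrightarrow> jsr (A_mat \<gamma> P d \<Phi> \<alpha> \<eta>) < 1)"
proof -
  define M where "M \<pi> = M_mat \<gamma> P d \<Phi> \<pi>" for \<pi>
  define B where "B \<pi> = M \<pi> + \<eta> *\<^sub>R mat 1" for \<pi>
  define A where "A = A_mat \<gamma> P d \<Phi> \<alpha> \<eta>"
  define c where "c = c_Phi \<gamma> P d \<Phi>"
  define Le where "Le = L_Phi_eta \<gamma> P d \<Phi> \<eta>"
  define L where "L = L_Phi \<gamma> P d \<Phi>"
  define R where "R = 1 - 2 * \<alpha> * (c + \<eta>) + \<alpha>\<^sup>2 * Le\<^sup>2"
  define R' where "R' = 1 - 2 * \<alpha> * (c + \<eta>) + \<alpha>\<^sup>2 * (L + \<eta>)\<^sup>2"
  have A_eq: "A \<pi> = mat 1 - \<alpha> *\<^sub>R B \<pi>" for \<pi> unfolding A_def A_mat_def B_def M_def ..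
  have c_le: "c \<le> lambda_min ((1/2) *\<^sub>R (M \<pi> + transpose (M \<pi>)))" for \<pi>
    unfolding c_def c_Phi_def M_def by (rule Min_le) auto
  have Le_ge: "opnorm2 (B \<pi>) \<le> Le" for \<pi>
    unfolding Le_def L_Phi_eta_def B_def M_def by (rule Max_ge) auto
  have Le0: "0 \<le> Le" using Le_ge[of undefined] opnorm2_nonneg[of "B undefined"] by linarith
  have L_ge: "opnorm2 (M \<pi>) \<le> L" for \<pi>
    unfolding L_def L_Phi_def M_def by (rule Max_ge) auto
  have quad: "c * (x \<bullet> x) \<le> x \<bullet> (M \<pi> *v x)" for \<pi> x
  proof -
    have "c * (x \<bullet> x) \<le> lambda_min ((1/2) *\<^sub>R (M \<pi> + transpose (M \<pi>))) * (x \<bullet> x)"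
      using c_le by (intro mult_right_mono) auto
    also have "\<dots> \<le> x \<bullet> (((1/2) *\<^sub>R (M \<pi> + transpose (M \<pi>))) *v x)"
      by (rule sym_lambda_min[OF transpose_sym_half])
    finally show ?thesis by (simp only: quad_half)
  qed
  have Bx: "B \<pi> *v x = M \<pi> *v x + \<eta> *\<^sub>R x" for \<pi> x
    unfolding B_def by (simp add: matrix_vector_mult_add_rdistrib scaleR_matrix_vector_assoc[symmetric])
  have normA: "(norm (A \<pi> *v x))\<^sup>2 \<le> R * (norm x)\<^sup>2" for \<pi> x
  proof -
    have Ax: "A \<pi> *v x = x - \<alpha> *\<^sub>R (B \<pi> *v x)"
      unfolding A_eq by (simp add: matrix_vector_mult_diff_rdistrib scaleR_matrix_vector_assoc[symmetric])
    have "(norm (A \<pi> *v x))\<^sup>2 = x \<bullet> x - 2 * \<alpha> * (x \<bullet> (B \<pi> *v x)) + \<alpha>\<^sup>2 * (norm (B \<pi> *v x))\<^sup>2"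
      unfolding Ax power2_norm_eq_inner
      by (simp add: inner_diff_left inner_diff_right power2_eq_square inner_commute algebra_simps)
    also have "x \<bullet> (B \<pi> *v x) = x \<bullet> (M \<pi> *v x) + \<eta> * (x \<bullet> x)"
      unfolding Bx by (simp add: inner_add_right)
    also have "(norm (B \<pi> *v x))\<^sup>2 \<le> (Le * norm x)\<^sup>2"
    proof -
      have "norm (B \<pi> *v x) \<le> opnorm2 (B \<pi>) * norm x" by (rule opnorm2_bound)
      also have "\<dots> \<le> Le * norm x" using Le_ge by (intro mult_right_mono) auto
      finally show ?thesis by (intro power_mono) auto
    qed
    then have "x \<bullet> x - 2 * \<alpha> * (x \<bullet> (M \<pi> *v x) + \<eta> * (x \<bullet> x)) + \<alpha>\<^sup>2 * (norm (B \<pi> *v x))\<^sup>2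
             \<le> x \<bullet> x - 2 * \<alpha> * (c * (x \<bullet> x) + \<eta> * (x \<bullet> x)) + \<alpha>\<^sup>2 * (Le * norm x)\<^sup>2"
      using quad[of x \<pi>] alpha eta by (intro add_mono diff_mono mult_left_mono) auto
    also have "\<dots> = R * (norm x)\<^sup>2"
      unfolding R_def power2_norm_eq_inner[symmetric] by (simp add: algebra_simps power2_eq_square)
    finally show ?thesis .
  qed
  have R0: "0 \<le> R"
  proof -
    have "0 \<le> (norm (A undefined *v axis undefined 1))\<^sup>2" by simp
    also have "\<dots> \<le> R * (norm (axis undefined (1::real) :: real^'m))\<^sup>2" by (rule normA)
    finally show ?thesis by (simp add: norm_axis_1)
  qed
  have Aq: "opnorm2 (A \<pi>) \<le> sqrt R" for \<pi>
  proof (rule opnorm2_le)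
    fix x
    have "norm (A \<pi> *v x) = sqrt ((norm (A \<pi> *v x))\<^sup>2)" by simp
    also have "\<dots> \<le> sqrt (R * (norm x)\<^sup>2)" by (rule real_sqrt_le_mono[OF normA])
    also have "\<dots> = sqrt R * norm x" by (simp add: real_sqrt_mult)
    finally show "norm (A \<pi> *v x) \<le> sqrt R * norm x" .
  qed
  have jsr_le: "jsr A \<le> sqrt R"
  proof -
    have conv: "convergent (\<lambda>k. bseq A (Suc k) powr (1 / real (Suc k)))"
      by (rule fekete_conv[OF bseq_nonneg bseq_sub])
    have "bseq A (Suc k) powr (1 / real (Suc k)) \<le> sqrt R" for k
    proof -
      have "bseq A (Suc k) \<le> sqrt R ^ Suc k"
        by (rule bseq_le) (metis matprod_list_bound Aq real_sqrt_ge_zero R0)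
      then have "bseq A (Suc k) powr (1 / real (Suc k)) \<le> (sqrt R ^ Suc k) powr (1 / real (Suc k))"
        by (intro powr_mono2 bseq_nonneg) auto
      also have "\<dots> = sqrt R" by (rule root_pow_powr) (use R0 in auto)
      finally show ?thesis .
    qed
    then show ?thesis unfolding jsr_bseq by (rule lim_le[OF conv])
  qed
  have c2: "Le \<le> L + \<eta>"
    unfolding Le_def L_Phi_eta_def
  proof (rule Max.boundedI)
    show "finite (range (\<lambda>\<pi>. opnorm2 (M_mat \<gamma> P d \<Phi> \<pi> + \<eta> *\<^sub>R mat 1)))" by simp
    show "range (\<lambda>\<pi>. opnorm2 (M_mat \<gamma> P d \<Phi> \<pi> + \<eta> *\<^sub>R mat 1)) \<noteq> {}" by simp
    fix y assume "y \<in> range (\<lambda>\<pi>. opnorm2 (M_mat \<gamma> P d \<Phi> \<pi> + \<eta> *\<^sub>R mat 1))"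
    then obtain \<pi> where y: "y = opnorm2 (B \<pi>)" unfolding B_def M_def by auto
    have "opnorm2 (B \<pi>) \<le> opnorm2 (M \<pi>) + \<eta>"
    proof (rule opnorm2_le)
      fix x
      have "norm (B \<pi> *v x) \<le> norm (M \<pi> *v x) + norm (\<eta> *\<^sub>R x)" unfolding Bx by (rule norm_triangle_ineq)
      also have "\<dots> \<le> opnorm2 (M \<pi>) * norm x + \<eta> * norm x" using eta
        by (intro add_mono opnorm2_bound) auto
      finally show "norm (B \<pi> *v x) \<le> (opnorm2 (M \<pi>) + \<eta>) * norm x" by (simp add: algebra_simps)
    qed
    then show "y \<le> L + \<eta>" using y L_ge[of \<pi>] by linarith
  qed
  have LL: "Le\<^sup>2 \<le> (L + \<eta>)\<^sup>2" using Le0 c2 by (intro power_mono) auto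
  have RR: "R \<le> R'" unfolding R_def R'_def using LL by (simp add: mult_left_mono)
  have c4: "jsr A < 1" if "c + \<eta> > 0" "\<alpha> < 2 * (c + \<eta>) / Le\<^sup>2"
  proof -
    have "Le \<noteq> 0" using that alpha by auto
    then have "\<alpha> * Le\<^sup>2 < 2 * (c + \<eta>)" using that by (simp add: less_divide_eq)
    then have "\<alpha> * (\<alpha> * Le\<^sup>2) < \<alpha> * (2 * (c + \<eta>))" using alpha by simp
    then have "R < 1" unfolding R_def by (simp add: power2_eq_square algebra_simps)
    then have "sqrt R < 1" by simp
    then show ?thesis using jsr_le by linarith
  qed
  have c5: "jsr A < 1" if "c + \<eta> > 0" "\<alpha> < 2 * (c + \<eta>) / (L + \<eta>)\<^sup>2"
  proof -
    have "L + \<eta> \<noteq> 0" using that alpha by auto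
    then have "\<alpha> * (L + \<eta>)\<^sup>2 < 2 * (c + \<eta>)" using that by (simp add: less_divide_eq)
    then have "\<alpha> * (\<alpha> * (L + \<eta>)\<^sup>2) < \<alpha> * (2 * (c + \<eta>))" using alpha by simp
    then have "R' < 1" unfolding R'_def by (simp add: power2_eq_square algebra_simps)
    then have "R < 1" using RR by simp
    then have "sqrt R < 1" by simp
    then show ?thesis using jsr_le by linarith
  qed
  have c3: "jsr A \<le> sqrt R'" using jsr_le RR by (meson order_trans real_sqrt_le_mono)
  show ?thesis
    using jsr_le c2 c3 c4 c5 unfolding A_def c_def Le_def L_def R_def R'_def by blast
qed

end
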